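(* Let $\mathcal E$ be a nest on a complex Banach space $X$ and let $\Phi$ be a support function on $\mathcal E$ with $\Phi(\{0\})=\{0\}$. Then: (i) $\mathcal M(\Phi)=\mathcal M(\Phi_-)$; (ii) $\Phi_{\mathcal M(\Phi)}=\Phi_-$; (iii) if $\Phi$ is admissible, then $\Phi_{\mathcal M(\Phi)}=\Phi$.
   Context: A nest $\mathcal E$ on $X$ is a family of closed linear subspaces of $X$, totally ordered by inclusion, containing $\{0\}$ and $X$, closed under arbitrary meets $\wedge$ (intersections) and joins $\vee$ (norm-closed linear spans of unions). For $E\in\mathcal E$, $E_-=\vee\{F\in\mathcal E: F\subsetneq E\}$. A support function on $\mathcal E$ is an inclusion-preserving map $\Phi:\mathcal E\to\mathcal E$; it is admissible if for every $N\in\mathcal E\setminus\{\{0\}\}$, $\vee_{E\in\mathcal E,E\subsetneq N}\Phi(E)=\Phi(N_-)$. For a support function $\Phi$, $\Phi_-$ is defined by $\Phi_-(\{0\})=\Phi(\{0\})$ and, for $E\neq\{0\}$, $\Phi_-(E)=\Phi(E)$ if $E_-\subsetneq E$ and $\Phi_-(E)=\vee_{F\in\mathcal E,F\subsetneq E}\Phi(F)$ if $E_-=E$ (it is the greatest admissible support function below $\Phi$ in the pointwise inclusion order). $\mathcal M(\Phi)=\{T\in\mathcal B(X): TE\subseteq\Phi(E)\ \forall E\in\mathcal E\}$; it is a bimodule over the nest algebra $\mathcal T(\mathcal E)=\{T\in\mathcal B(X): TE\subseteq E\ \forall E\in\mathcal E\}$. For a $\mathcal T(\mathcal E)$-bimodule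 $\mathcal J$ (a linear subspace of $\mathcal B(X)$ with $\mathcal T(\mathcal E)\mathcal J,\mathcal J\mathcal T(\mathcal E)\subseteq\mathcal J$), $\Phi_{\mathcal J}(E)=[\mathcal JE]$, the norm-closed linear span of $\{Tx:T\in\mathcal J,x\in E\}$. *)

theory Defs
  imports "HOL-Analysis.Analysis"
begin

class complex_vector = real_vector +
  fixes scaleC :: "complex \<Rightarrow> 'a \<Rightarrow> 'a" (infixr \<open>*\<^sub>C\<close> 75)
  assumes scaleC_add_right: "a *\<^sub>C (x + y) = a *\<^sub>C x + a *\<^sub>C y"
    and scaleC_add_left: "(a + b) *\<^sub>C x = a *\<^sub>C x + b *\<^sub>C x"
    and scaleC_scaleC: "a *\<^sub>C (b *\<^sub>C x) = (a * b) *\<^sub>C x"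
    and scaleC_one: "1 *\<^sub>C x = x"
    and scaleC_of_real: "(complex_of_real r) *\<^sub>C x = r *\<^sub>R x"

class complex_normed_vector = complex_vector + real_normed_vector +
  assumes norm_scaleC: "norm (a *\<^sub>C x) = cmod a * norm x"

definition csubspace :: "'a::complex_vector set \<Rightarrow> bool" where
  "csubspace S \<longleftrightarrow> 0 \<in> S \<and> (\<forall>x\<in>S. \<forall>y\<in>S. x + y \<in> S) \<and> (\<forall>c. \<forall>x\<in>S. c *\<^sub>C x \<in> S)"

definition closed_csubspace :: "'a::complex_normed_vector set \<Rightarrow> bool" where
  "closed_csubspace S \<longleftrightarrow> csubspace S \<and> closed S"

definition cspan :: "'a::complex_vector set \<Rightarrow> 'a set" where
  "cspan S = \<Inter>{V. csubspace V \<and> S \<subseteq> V}"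

definition cjoin :: "'a::complex_normed_vector set set \<Rightarrow> 'a set" where
  "cjoin F = closure (cspan (\<Union>F))"

definition cbounded_linear :: "('a::complex_normed_vector \<Rightarrow> 'a) \<Rightarrow> bool" where
  "cbounded_linear T \<longleftrightarrow> bounded_linear T \<and> (\<forall>c x. T (c *\<^sub>C x) = c *\<^sub>C T x)"

definition nest :: "'a::complex_normed_vector set set \<Rightarrow> bool" where
  "nest \<E> \<longleftrightarrow> (\<forall>E\<in>\<E>. closed_csubspace E)
     \<and> (\<forall>E\<in>\<E>. \<forall>F\<in>\<E>. E \<subseteq> F \<or> F \<subseteq> E)
     \<and> {0} \<in> \<E> \<and> UNIV \<in> \<E>
     \<and> (\<forall>\<F>. \<F> \<subseteq> \<E> \<longrightarrow> \<Inter>\<F> \<in> \<E>)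
     \<and> (\<forall>\<F>. \<F> \<subseteq> \<E> \<longrightarrow> cjoin \<F> \<in> \<E>)"

definition nest_minus :: "'a::complex_normed_vector set set \<Rightarrow> 'a set \<Rightarrow> 'a set" where
  "nest_minus \<E> E = cjoin {F\<in>\<E>. F \<subset> E}"

definition support_function ::
  "'a::complex_normed_vector set set \<Rightarrow> ('a set \<Rightarrow> 'a set) \<Rightarrow> bool" where
  "support_function \<E> \<Phi> \<longleftrightarrow> (\<forall>E\<in>\<E>. \<Phi> E \<in> \<E>) \<and> (\<forall>E\<in>\<E>. \<forall>F\<in>\<E>. E \<subseteq> F \<longrightarrow> \<Phi> E \<subseteq> \<Phi> F)"

definition admissible ::
  "'a::complex_normed_vector set set \<Rightarrow> ('a set \<Rightarrow> 'a set) \<Rightarrow> bool" where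
  "admissible \<E> \<Phi> \<longleftrightarrow> support_function \<E> \<Phi> \<and>
     (\<forall>N\<in>\<E>. N \<noteq> {0} \<longrightarrow> cjoin (\<Phi> ` {E\<in>\<E>. E \<subset> N}) = \<Phi> (nest_minus \<E> N))"

definition Phi_minus ::
  "'a::complex_normed_vector set set \<Rightarrow> ('a set \<Rightarrow> 'a set) \<Rightarrow> 'a set \<Rightarrow> 'a set" where
  "Phi_minus \<E> \<Phi> E =
     (if E = {0} then \<Phi> {0}
      else if nest_minus \<E> E \<subset> E then \<Phi> E
      else cjoin (\<Phi> ` {F\<in>\<E>. F \<subset> E}))"

definition M_of ::
  "'a::complex_normed_vector set set \<Rightarrow> ('a set \<Rightarrow> 'a set) \<Rightarrow> ('a \<Rightarrow> 'a) set" where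
  "M_of \<E> \<Phi> = {T. cbounded_linear T \<and> (\<forall>E\<in>\<E>. T ` E \<subseteq> \<Phi> E)}"

definition Phi_of :: "('a::complex_normed_vector \<Rightarrow> 'a) set \<Rightarrow> 'a set \<Rightarrow> 'a set" where
  "Phi_of J E = closure (cspan {T x | T x. T \<in> J \<and> x \<in> E})"

end

theory Submission
  imports Defs
begin


definition gr_ok :: "('a::real_vector \<Rightarrow> real) \<Rightarrow> 'a \<Rightarrow> real \<Rightarrow> ('a \<times> real) set \<Rightarrow> bool" where
 "gr_ok p x d G \<longleftrightarrow> (\<forall>a u v. (a,u)\<in>G \<longrightarrow> (a,v)\<in>G \<longrightarrow> u = v)
   \<and> (\<forall>a u b v. (a,u)\<in>G \<longrightarrow> (b,v)\<in>G \<longrightarrow> (a+b,u+v)\<in>G)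
   \<and> (\<forall>a u c. (a,u)\<in>G \<longrightarrow> (c *\<^sub>R a, c*u)\<in>G)
   \<and> (\<forall>a u. (a,u)\<in>G \<longrightarrow> u \<le> p a) \<and> (x,d)\<in>G"

lemma gr_chain:
  assumes C: "C \<in> chains {G. gr_ok p x d G}" and ne: "C \<noteq> {}"
  shows "gr_ok p x d (\<Union>C)"
proof -
  have ok: "\<And>G. G \<in> C \<Longrightarrow> gr_ok p x d G" using C by (auto simp: chains_def)
  have ch: "\<And>G H. G \<in> C \<Longrightarrow> H \<in> C \<Longrightarrow> G \<subseteq> H \<or> H \<subseteq> G" using C by (auto simp: chains_def chain_subset_def)
  have two: "\<exists>K\<in>C. (a,u)\<in>K \<and> (b,v)\<in>K" if "(a,u)\<in>\<Union>C" "(b,v)\<in>\<Union>C" for a u b v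
    using that ch by blast
  show ?thesis unfolding gr_ok_def
  proof (intro conjI allI impI)
    fix a u v assume "(a,u)\<in>\<Union>C" "(a,v)\<in>\<Union>C"
    then obtain K where "K\<in>C" "(a,u)\<in>K" "(a,v)\<in>K" using two by blast
    then show "u = v" using ok[of K] unfolding gr_ok_def by blast
  next
    fix a u b v assume "(a,u)\<in>\<Union>C" "(b,v)\<in>\<Union>C"
    then obtain K where "K\<in>C" "(a,u)\<in>K" "(b,v)\<in>K" using two by blast
    then show "(a+b,u+v)\<in>\<Union>C" using ok[of K] unfolding gr_ok_def by blast
  next
    fix a u c assume "(a,u)\<in>\<Union>C"
    then obtain K where "K\<in>C" "(a,u)\<in>K" by blast
    then show "(c *\<^sub>R a, c*u)\<in>\<Union>C" using ok[of K] unfolding gr_ok_def by blast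
  next
    fix a u assume "(a,u)\<in>\<Union>C"
    then obtain K where "K\<in>C" "(a,u)\<in>K" by blast
    then show "u \<le> p a" using ok[of K] unfolding gr_ok_def by blast
  next
    obtain K where "K \<in> C" using ne by blast
    then show "(x,d)\<in>\<Union>C" using ok[of K] unfolding gr_ok_def by blast
  qed
qed

lemma gr_extend:
  fixes p :: "'a::real_vector \<Rightarrow> real"
  assumes sub: "\<And>a b. p (a+b) \<le> p a + p b"
    and hom: "\<And>t a. t > 0 \<Longrightarrow> p (t *\<^sub>R a) = t * p a"
    and M: "gr_ok p x d M" and w: "\<And>u. (w,u) \<notin> M"
  shows "\<exists>M'. gr_ok p x d M' \<and> M \<subseteq> M' \<and> M' \<noteq> M"
proof -
  have fn: "\<And>a u v. (a,u)\<in>M \<Longrightarrow> (a,v)\<in>M \<Longrightarrow> u = v"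
   and add: "\<And>a u b v. (a,u)\<in>M \<Longrightarrow> (b,v)\<in>M \<Longrightarrow> (a+b,u+v)\<in>M"
   and scl: "\<And>a u c. (a,u)\<in>M \<Longrightarrow> (c *\<^sub>R a, c*u)\<in>M"
   and dom: "\<And>a u. (a,u)\<in>M \<Longrightarrow> u \<le> p a" and xd: "(x,d)\<in>M"
    using M unfolding gr_ok_def by blast+
  define L where "L = {u - p (a - w) | a u. (a,u)\<in>M}"
  define c where "c = Sup L"
  have key: "u - p (a - w) \<le> p (b + w) - v" if "(a,u)\<in>M" "(b,v)\<in>M" for a u b v
  proof -
    have "u + v \<le> p (a + b)" using dom add that by blast
    also have "\<dots> = p ((a - w) + (b + w))" by (simp add: algebra_simps)
    also have "\<dots> \<le> p (a - w) + p (b + w)" by (rule sub)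
    finally show ?thesis by simp
  qed
  have zero: "(0,0) \<in> M" using scl[OF xd, of 0] by simp
  have Lne: "L \<noteq> {}" using zero unfolding L_def by blast
  have cle: "c \<le> p (b + w) - v" if "(b,v)\<in>M" for b v
    unfolding c_def using Lne key[OF _ that] by (auto simp: L_def intro!: cSup_least)
  have cge: "u - p (a - w) \<le> c" if "(a,u)\<in>M" for a u
  proof -
    have "bdd_above L" unfolding bdd_above_def L_def using key[OF _ zero] by (intro exI[of _ "p (0 + w) - 0"]) blast
    then show ?thesis unfolding c_def using that by (intro cSup_upper) (auto simp: L_def)
  qed
  define M' where "M' = {(a + t *\<^sub>R w, u + t * c) | a u t. (a,u)\<in>M}"
  have wdom: "a + t *\<^sub>R w = b + s *\<^sub>R w \<Longrightarrow> (a,u)\<in>M \<Longrightarrow> (b,v)\<in>M \<Longrightarrow> t = s" for a b t s u v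
  proof (rule ccontr)
    assume e: "a + t *\<^sub>R w = b + s *\<^sub>R w" and au: "(a,u)\<in>M" and bv: "(b,v)\<in>M" and ts: "t \<noteq> s"
    have "(t - s) *\<^sub>R w = b - a" using e by (simp add: algebra_simps)
    then have "(1/(t-s)) *\<^sub>R ((t - s) *\<^sub>R w) = (1/(t-s)) *\<^sub>R (b - a)" by simp
    then have "w = (1/(t-s)) *\<^sub>R (b - a)" using ts by simp
    moreover have "(b - a, v - u) \<in> M" using add[OF bv scl[OF au, of "-1"]] by simp
    ultimately show False using w scl by metis
  qed
  have "gr_ok p x d M'" unfolding gr_ok_def
  proof (intro conjI allI impI)
    fix z u1 u2 assume "(z,u1)\<in>M'" "(z,u2)\<in>M'"
    then obtain a u t b v s where 1: "z = a + t *\<^sub>R w" "u1 = u + t*c" "(a,u)\<in>M"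
      and 2: "z = b + s *\<^sub>R w" "u2 = v + s*c" "(b,v)\<in>M" unfolding M'_def by blast
    then have "t = s" using wdom by metis
    then have "a = b" using 1 2 by simp
    then show "u1 = u2" using 1 2 \<open>t = s\<close> fn by metis
  next
    fix z1 u1 z2 u2 assume "(z1,u1)\<in>M'" "(z2,u2)\<in>M'"
    then obtain a u t b v s where 1: "z1 = a + t *\<^sub>R w" "u1 = u + t*c" "(a,u)\<in>M"
      and 2: "z2 = b + s *\<^sub>R w" "u2 = v + s*c" "(b,v)\<in>M" unfolding M'_def by blast
    then show "(z1+z2,u1+u2)\<in>M'" unfolding M'_def
      by (intro CollectI exI[of _ "a+b"] exI[of _ "u+v"] exI[of _ "t+s"]) (auto simp: algebra_simps add)
  next
    fix z1 u1 r assume "(z1,u1)\<in>M'"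
    then obtain a u t where 1: "z1 = a + t *\<^sub>R w" "u1 = u + t*c" "(a,u)\<in>M"
      unfolding M'_def by blast
    then show "(r *\<^sub>R z1, r*u1)\<in>M'" unfolding M'_def
      by (intro CollectI exI[of _ "r *\<^sub>R a"] exI[of _ "r*u"] exI[of _ "r*t"]) (auto simp: algebra_simps scl)
  next
    fix z1 u1 assume "(z1,u1)\<in>M'"
    then obtain a u t where 1: "z1 = a + t *\<^sub>R w" "u1 = u + t*c" and au: "(a,u)\<in>M"
      unfolding M'_def by blast
    consider "t = 0" | "t > 0" | "t < 0" by linarith
    then show "u1 \<le> p z1"
    proof cases
      case 1 then show ?thesis using \<open>z1 = _\<close> \<open>u1 = _\<close> dom au by simp
    next
      case 2
      have "c \<le> p ((1/t) *\<^sub>R a + w) - (1/t)*u" using cle scl[OF au, of "1/t"] by blast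
      then have "t * c \<le> t * (p ((1/t) *\<^sub>R a + w) - (1/t)*u)" using 2 by (simp add: mult_left_mono)
      also have "\<dots> = p (t *\<^sub>R ((1/t) *\<^sub>R a + w)) - u" using 2 by (subst hom[OF 2]) (simp add: right_diff_distrib)
      also have "t *\<^sub>R ((1/t) *\<^sub>R a + w) = z1" using 2 \<open>z1 = _\<close> by (simp add: algebra_simps)
      finally show ?thesis using \<open>u1 = _\<close> by simp
    next
      case 3
      define s where "s = -t"
      have s: "s > 0" using 3 s_def by simp
      have "(1/s)*u - p ((1/s) *\<^sub>R a - w) \<le> c" using cge scl[OF au, of "1/s"] by blast
      then have "s * ((1/s)*u - p ((1/s) *\<^sub>R a - w)) \<le> s * c" using s by (simp add: mult_left_mono)
      moreover have "s * ((1/s)*u - p ((1/s) *\<^sub>R a - w)) = u - p (s *\<^sub>R ((1/s) *\<^sub>R a - w))"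
        using s by (subst hom[OF s]) (simp add: right_diff_distrib)
      moreover have "s *\<^sub>R ((1/s) *\<^sub>R a - w) = z1" using s \<open>z1 = _\<close> s_def by (simp add: algebra_simps)
      ultimately show ?thesis using \<open>u1 = _\<close> s_def by simp
    qed
  next
    show "(x,d)\<in>M'" unfolding M'_def using xd by (intro CollectI exI[of _ x] exI[of _ d] exI[of _ 0]) simp
  qed
  moreover have "M \<subseteq> M'" unfolding M'_def
  proof
    fix z assume "z \<in> M" then show "z \<in> {(a + t *\<^sub>R w, u + t * c) | a u t. (a,u)\<in>M}"
      by (cases z) (intro CollectI exI[of _ "fst z"] exI[of _ "snd z"] exI[of _ 0]; simp)
  qed
  moreover have "(w, c) \<in> M'" unfolding M'_def using zero by (intro CollectI exI[of _ 0] exI[of _ 0] exI[of _ 1]) simp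
  ultimately show ?thesis using w by blast
qed

lemma HB_real:
  fixes p :: "'a::real_vector \<Rightarrow> real"
  assumes sub: "\<And>a b. p (a+b) \<le> p a + p b"
    and hom: "\<And>t a. t > 0 \<Longrightarrow> p (t *\<^sub>R a) = t * p a"
    and init: "\<And>t. t * d \<le> p (t *\<^sub>R x)" and x0: "x \<noteq> 0"
  shows "\<exists>g. (\<forall>a b. g (a+b) = g a + g b) \<and> (\<forall>c a. g (c *\<^sub>R a) = c * g a) \<and> (\<forall>z. g z \<le> p z) \<and> g x = d"
proof -
  define G0 where "G0 = {(t *\<^sub>R x, t*d) | t. True}"
  have G0: "gr_ok p x d G0" unfolding gr_ok_def G0_def
  proof (intro conjI allI impI)
    fix a u v assume "(a,u)\<in>{(t *\<^sub>R x, t*d) | t. True}" "(a,v)\<in>{(t *\<^sub>R x, t*d) | t. True}"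
    then obtain t s where "a = t *\<^sub>R x" "u = t*d" "a = s *\<^sub>R x" "v = s*d" by blast
    then show "u = v" using x0 by (metis scaleR_cancel_right)
  next
    fix a u b v assume "(a,u)\<in>{(t *\<^sub>R x, t*d) | t. True}" "(b,v)\<in>{(t *\<^sub>R x, t*d) | t. True}"
    then obtain t s where "a = t *\<^sub>R x" "u = t*d" "b = s *\<^sub>R x" "v = s*d" by blast
    then show "(a+b,u+v)\<in>{(t *\<^sub>R x, t*d) | t. True}"
      by (intro CollectI exI[of _ "t+s"]) (simp add: algebra_simps)
  next
    fix a u c assume "(a,u)\<in>{(t *\<^sub>R x, t*d) | t. True}"
    then obtain t where "a = t *\<^sub>R x" "u = t*d" by blast
    then show "(c *\<^sub>R a, c*u)\<in>{(t *\<^sub>R x, t*d) | t. True}"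
      by (intro CollectI exI[of _ "c*t"]) (simp add: algebra_simps)
  next
    fix a u assume "(a,u)\<in>{(t *\<^sub>R x, t*d) | t. True}"
    then show "u \<le> p a" using init by blast
  next
    show "(x,d)\<in>{(t *\<^sub>R x, t*d) | t. True}" by (intro CollectI exI[of _ 1]) simp
  qed
  have "\<exists>M\<in>{G. gr_ok p x d G}. \<forall>X\<in>{G. gr_ok p x d G}. M \<subseteq> X \<longrightarrow> X = M"
  proof (rule Zorn_Lemma2, intro ballI)
    fix C assume C: "C \<in> chains {G. gr_ok p x d G}"
    show "\<exists>U\<in>{G. gr_ok p x d G}. \<forall>X\<in>C. X \<subseteq> U"
    proof (cases "C = {}")
      case True then show ?thesis using G0 by blast
    next
      case False then show ?thesis using gr_chain[OF C False] by blast
    qed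
  qed
  then obtain M where M: "gr_ok p x d M" and max: "\<And>X. gr_ok p x d X \<Longrightarrow> M \<subseteq> X \<Longrightarrow> X = M" by blast
  have tot: "\<exists>u. (w,u) \<in> M" for w
  proof (rule ccontr)
    assume "\<nexists>u. (w,u) \<in> M"
    then obtain M' where "gr_ok p x d M'" "M \<subseteq> M'" "M' \<noteq> M" using gr_extend[OF sub hom M] by blast
    then show False using max by blast
  qed
  have fn: "\<And>a u v. (a,u)\<in>M \<Longrightarrow> (a,v)\<in>M \<Longrightarrow> u = v"
   and add: "\<And>a u b v. (a,u)\<in>M \<Longrightarrow> (b,v)\<in>M \<Longrightarrow> (a+b,u+v)\<in>M"
   and scl: "\<And>a u c. (a,u)\<in>M \<Longrightarrow> (c *\<^sub>R a, c*u)\<in>M"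
   and dom: "\<And>a u. (a,u)\<in>M \<Longrightarrow> u \<le> p a" and xd: "(x,d)\<in>M"
    using M unfolding gr_ok_def by blast+
  define g where "g w = (THE u. (w,u) \<in> M)" for w
  have gM: "(w, g w) \<in> M" for w
    unfolding g_def using tot[of w] fn by (metis theI)
  have gv: "(w,u) \<in> M \<Longrightarrow> g w = u" for w u using gM fn by blast
  show ?thesis
    by (intro exI[of _ g] conjI allI gv add scl gM xd dom)
qed



lemma scaleC_zero_left[simp]: "(0::complex) *\<^sub>C x = 0"
  using scaleC_of_real[of 0 x] by simp

lemma scaleC_zero_right[simp]: "c *\<^sub>C (0::'a::complex_vector) = 0"
proof -
  have "c *\<^sub>C (0::'a) = c *\<^sub>C (0 + 0)" by simp
  also have "\<dots> = c *\<^sub>C 0 + c *\<^sub>C 0" by (rule scaleC_add_right)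
  finally show ?thesis by simp
qed

lemma scaleC_real: "complex_of_real r *\<^sub>C x = r *\<^sub>R x"
  by (rule scaleC_of_real)

lemma scaleC_scaleR_commute: "c *\<^sub>C (r *\<^sub>R x) = r *\<^sub>R (c *\<^sub>C (x::'a::complex_vector))"
  by (metis scaleC_of_real scaleC_scaleC mult.commute)

lemma scaleC_decomp: "c *\<^sub>C x = Re c *\<^sub>R x + Im c *\<^sub>R (\<i> *\<^sub>C (x::'a::complex_vector))"
proof -
  have "c *\<^sub>C x = (complex_of_real (Re c) + complex_of_real (Im c) * \<i>) *\<^sub>C x"
    by (metis complex_eq mult.commute)
  also have "\<dots> = Re c *\<^sub>R x + Im c *\<^sub>R (\<i> *\<^sub>C x)"
    by (simp add: scaleC_add_left scaleC_scaleC[symmetric] scaleC_of_real)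
  finally show ?thesis .
qed

lemma scaleC_ii_ii: "\<i> *\<^sub>C (\<i> *\<^sub>C x) = - (x::'a::complex_vector)"
proof -
  have "\<i> *\<^sub>C (\<i> *\<^sub>C x) = (\<i> * \<i>) *\<^sub>C x" by (rule scaleC_scaleC)
  also have "\<i> * \<i> = complex_of_real (-1)" by simp
  also have "complex_of_real (-1) *\<^sub>C x = (-1) *\<^sub>R x" by (rule scaleC_of_real)
  finally show ?thesis by simp
qed

lemma csubspace_0: "csubspace S \<Longrightarrow> 0 \<in> S" by (simp add: csubspace_def)
lemma csubspace_add: "csubspace S \<Longrightarrow> x \<in> S \<Longrightarrow> y \<in> S \<Longrightarrow> x + y \<in> S" by (simp add: csubspace_def)
lemma csubspace_scaleC: "csubspace S \<Longrightarrow> x \<in> S \<Longrightarrow> c *\<^sub>C x \<in> S" by (simp add: csubspace_def)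
lemma csubspace_scaleR: "csubspace S \<Longrightarrow> x \<in> S \<Longrightarrow> c *\<^sub>R x \<in> S"
  by (metis csubspace_scaleC scaleC_of_real)
lemma csubspace_neg: "csubspace S \<Longrightarrow> x \<in> S \<Longrightarrow> - x \<in> S"
  using csubspace_scaleR[of S x "-1"] by simp

lemma infdist_glb: "A \<noteq> {} \<Longrightarrow> (\<And>a. a\<in>A \<Longrightarrow> c \<le> dist x a) \<Longrightarrow> c \<le> infdist x A"
  by (simp add: infdist_notempty cINF_greatest)

lemma sep_functional:
  fixes F :: "'a::complex_normed_vector set"
  assumes F: "closed_csubspace F" and x: "x \<notin> F"
  shows "\<exists>h::'a \<Rightarrow> complex. (\<forall>a b. h (a+b) = h a + h b) \<and> (\<forall>c a. h (c *\<^sub>C a) = c * h a)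
     \<and> (\<exists>K. \<forall>z. cmod (h z) \<le> K * norm z) \<and> (\<forall>m\<in>F. h m = 0) \<and> h x = 1"
proof -
  have S: "csubspace F" and cl: "closed F" using F by (auto simp: closed_csubspace_def)
  have Fne: "F \<noteq> {}" using csubspace_0[OF S] by blast
  define p where "p z = infdist z F" for z
  define d where "d = p x"
  have dpos: "d > 0" unfolding d_def p_def using infdist_pos_not_in_closed[OF cl Fne x] .
  have pnn: "p z \<ge> 0" for z unfolding p_def by (rule infdist_nonneg)
  have sub: "p (a+b) \<le> p a + p b" for a b
  proof -
    have 1: "p (a+b) \<le> dist a m1 + dist b m2" if "m1\<in>F" "m2\<in>F" for m1 m2
    proof -
      have "p (a+b) \<le> dist (a+b) (m1+m2)" unfolding p_def
        by (rule infdist_le) (rule csubspace_add[OF S that])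
      also have "\<dots> = norm ((a - m1) + (b - m2))" by (simp add: dist_norm algebra_simps)
      also have "\<dots> \<le> norm (a - m1) + norm (b - m2)" by (rule norm_triangle_ineq)
      finally show ?thesis by (simp add: dist_norm)
    qed
    have 2: "p (a+b) - dist b m2 \<le> p a" if "m2 \<in> F" for m2
      unfolding p_def[of a] using 1 that by (intro infdist_glb Fne) (simp add: algebra_simps)
    have "p (a+b) - p a \<le> p b" unfolding p_def[of b] using 2 by (intro infdist_glb Fne) (simp add: algebra_simps)
    then show ?thesis by simp
  qed
  have hom: "p (t *\<^sub>R a) = t * p a" if t: "t > 0" for t a
  proof (rule antisym)
    have "p (t *\<^sub>R a) / t \<le> dist a m" if "m \<in> F" for m
    proof -
      have "p (t *\<^sub>R a) \<le> dist (t *\<^sub>R a) (t *\<^sub>R m)" unfolding p_def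
        by (rule infdist_le) (rule csubspace_scaleR[OF S that])
      also have "\<dots> = t * dist a m" using t by (simp add: dist_norm scaleR_diff_right[symmetric])
      finally show ?thesis using t by (simp add: divide_le_eq mult.commute)
    qed
    then have "p (t *\<^sub>R a) / t \<le> p a" unfolding p_def[of a] by (intro infdist_glb Fne)
    then show "p (t *\<^sub>R a) \<le> t * p a" using t by (simp add: divide_le_eq mult.commute)
  next
    have "t * p a \<le> dist (t *\<^sub>R a) m" if "m \<in> F" for m
    proof -
      have "p a \<le> dist a ((1/t) *\<^sub>R m)" unfolding p_def
        by (rule infdist_le) (rule csubspace_scaleR[OF S that])
      also have "dist a ((1/t) *\<^sub>R m) = dist (t *\<^sub>R a) m / t"
      proof -
        have e: "t *\<^sub>R (a - (1/t) *\<^sub>R m) = t *\<^sub>R a - m" unfolding scaleR_diff_right using t by simp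
        have "dist (t *\<^sub>R a) m = norm (t *\<^sub>R (a - (1/t) *\<^sub>R m))" unfolding e dist_norm ..
        also have "\<dots> = t * dist a ((1/t) *\<^sub>R m)" using t unfolding norm_scaleR dist_norm by simp
        finally show ?thesis using t by simp
      qed
      finally show ?thesis using t by (simp add: le_divide_eq mult.commute)
    qed
    then show "t * p a \<le> p (t *\<^sub>R a)" unfolding p_def[of "t *\<^sub>R a"] by (intro infdist_glb Fne)
  qed
  have init: "t * d \<le> p (t *\<^sub>R x)" for t
  proof (cases "t > 0")
    case True then show ?thesis using hom d_def by simp
  next
    case False then have "t * d \<le> 0" using dpos by (simp add: mult_nonpos_nonneg)
    then show ?thesis using pnn[of "t *\<^sub>R x"] by linarith
  qed
  have x0: "x \<noteq> 0" using x csubspace_0[OF S] by blast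
  obtain g where gadd: "\<And>a b. g (a+b) = g a + g b" and gscl: "\<And>c a. g (c *\<^sub>R a) = c * g a"
    and gp: "\<And>z. g z \<le> p z" and gx: "g x = d"
    using HB_real[of p d x, OF sub hom init x0] by blast
  have gdiff: "g (a - b) = g a - g b" for a b using gadd[of a "-b"] gscl[of "-1" b] by simp
  have gF: "g m = 0" if "m \<in> F" for m
  proof -
    have "g m \<le> 0" using gp[of m] that by (simp add: p_def)
    moreover have "g ((-1) *\<^sub>R m) \<le> 0" using gp[of "(-1) *\<^sub>R m"] csubspace_scaleR[OF S that, of "-1"] by (simp add: p_def del: scaleR_minus1_left)
    ultimately show ?thesis using gscl[of "-1" m] by simp
  qed
  have gb: "\<bar>g z\<bar> \<le> norm z" for z
  proof -
    have pz: "p w \<le> norm w" for w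
      unfolding p_def using infdist_le[OF csubspace_0[OF S], of w] by simp
    have "g z \<le> norm z" using gp[of z] pz[of z] by simp
    moreover have "- g z \<le> norm z" using gp[of "(-1) *\<^sub>R z"] pz[of "(-1) *\<^sub>R z"] gscl[of "-1" z] by simp
    ultimately show ?thesis by simp
  qed
  define h0 where "h0 z = complex_of_real (g z) - \<i> * complex_of_real (g (\<i> *\<^sub>C z))" for z
  have h0add: "h0 (a+b) = h0 a + h0 b" for a b
    unfolding h0_def by (simp add: gadd scaleC_add_right algebra_simps)
  have h0scl: "h0 (c *\<^sub>C z) = c * h0 z" for c z
  proof -
    have 1: "g (c *\<^sub>C z) = Re c * g z + Im c * g (\<i> *\<^sub>C z)"
      by (subst scaleC_decomp) (simp add: gadd gscl)
    have "\<i> *\<^sub>C (c *\<^sub>C z) = Re c *\<^sub>R (\<i> *\<^sub>C z) + Im c *\<^sub>R (\<i> *\<^sub>C (\<i> *\<^sub>C z))"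
      by (metis scaleC_scaleC mult.commute scaleC_decomp)
    then have 2: "g (\<i> *\<^sub>C (c *\<^sub>C z)) = Re c * g (\<i> *\<^sub>C z) - Im c * g z"
      using gdiff by (simp add: gadd gscl scaleC_ii_ii)
    show ?thesis unfolding h0_def 1 2 by (simp add: complex_eq_iff)
  qed
  have h0F: "h0 m = 0" if "m \<in> F" for m
    unfolding h0_def using gF that csubspace_scaleC[OF S that] by simp
  have h0x: "h0 x \<noteq> 0"
  proof
    assume "h0 x = 0" then have "Re (h0 x) = 0" by simp
    then show False unfolding h0_def using gx dpos by simp
  qed
  have h0b: "cmod (h0 z) \<le> 2 * norm z" for z
  proof -
    have "cmod (h0 z) \<le> cmod (complex_of_real (g z)) + cmod (\<i> * complex_of_real (g (\<i> *\<^sub>C z)))"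
      unfolding h0_def by (rule norm_triangle_ineq4)
    also have "\<dots> = \<bar>g z\<bar> + \<bar>g (\<i> *\<^sub>C z)\<bar>" by (simp add: norm_mult)
    also have "\<dots> \<le> norm z + norm (\<i> *\<^sub>C z)" using gb by (intro add_mono)
    also have "norm (\<i> *\<^sub>C z) = norm z" by (simp add: norm_scaleC)
    finally show ?thesis by simp
  qed
  define h where "h z = h0 z / h0 x" for z
  show ?thesis
  proof (intro exI[of _ h] conjI allI ballI exI[of _ "2 / cmod (h0 x)"])
    fix a b show "h (a+b) = h a + h b" unfolding h_def h0add by (simp add: add_divide_distrib)
  next
    fix c a show "h (c *\<^sub>C a) = c * h a" unfolding h_def h0scl by simp
  next
    fix z show "cmod (h z) \<le> 2 / cmod (h0 x) * norm z"
      unfolding h_def using h0b[of z] h0x by (simp add: norm_divide divide_right_mono)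
  next
    fix m assume "m \<in> F" then show "h m = 0" unfolding h_def using h0F by simp
  next
    show "h x = 1" unfolding h_def using h0x by simp
  qed
qed

lemma rank_one:
  fixes F :: "'a::complex_normed_vector set"
  assumes F: "closed_csubspace F" and x: "x \<notin> F"
  shows "\<exists>T. cbounded_linear T \<and> T x = y \<and> (\<forall>m\<in>F. T m = 0) \<and> (\<forall>z. \<exists>c. T z = c *\<^sub>C y)"
proof -
  obtain h :: "'a \<Rightarrow> complex" where hadd: "\<And>a b. h (a+b) = h a + h b" and hscl: "\<And>c a. h (c *\<^sub>C a) = c * h a"
    and hb: "\<exists>K. \<forall>z. cmod (h z) \<le> K * norm z" and hF: "\<And>m. m\<in>F \<Longrightarrow> h m = 0" and hx: "h x = 1"
    using sep_functional[OF F x] by blast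
  obtain K where K: "\<And>z. cmod (h z) \<le> K * norm z" using hb by blast
  define T where "T z = h z *\<^sub>C y" for z
  have bl: "bounded_linear T"
  proof (rule bounded_linear_intro[where K = "K * norm y"])
    fix a b show "T (a + b) = T a + T b" unfolding T_def hadd by (rule scaleC_add_left)
  next
    fix r a
    have "T (r *\<^sub>R a) = T (complex_of_real r *\<^sub>C a)" by (simp add: scaleC_of_real)
    also have "\<dots> = complex_of_real r *\<^sub>C T a" unfolding T_def hscl by (simp add: scaleC_scaleC)
    also have "\<dots> = r *\<^sub>R T a" by (rule scaleC_of_real)
    finally show "T (r *\<^sub>R a) = r *\<^sub>R T a" .
  next
    fix a
    have "norm (T a) = cmod (h a) * norm y" unfolding T_def by (rule norm_scaleC)
    also have "\<dots> \<le> (K * norm a) * norm y" using K by (intro mult_right_mono) auto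
    finally show "norm (T a) \<le> norm a * (K * norm y)" by (simp add: ac_simps)
  qed
  have "cbounded_linear T" unfolding cbounded_linear_def
    using bl by (simp add: T_def hscl scaleC_scaleC)
  moreover have "T x = y" unfolding T_def hx by (rule scaleC_one)
  moreover have "\<forall>m\<in>F. T m = 0" unfolding T_def using hF by simp
  moreover have "\<forall>z. \<exists>c. T z = c *\<^sub>C y" unfolding T_def by blast
  ultimately show ?thesis by blast
qed

lemma cspan_csubspace: "csubspace (cspan S)"
  unfolding cspan_def csubspace_def by auto

lemma cspan_superset: "S \<subseteq> cspan S"
  unfolding cspan_def by auto

lemma cspan_least: "csubspace V \<Longrightarrow> S \<subseteq> V \<Longrightarrow> cspan S \<subseteq> V"
  unfolding cspan_def by auto

lemma bounded_linear_scaleC: "bounded_linear (\<lambda>x::'a::complex_normed_vector. c *\<^sub>C x)"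
  by (rule bounded_linear_intro[where K = "cmod c"])
     (auto simp: scaleC_add_right scaleC_scaleR_commute norm_scaleC mult.commute)

lemma closure_csubspace:
  fixes S :: "'a::complex_normed_vector set"
  assumes S: "csubspace S" shows "csubspace (closure S)"
proof -
  have add1: "x + a \<in> closure S" if "x \<in> closure S" "a \<in> S" for x a
  proof -
    have "closed ((\<lambda>x. x + a) -` closure S)"
      by (rule continuous_closed_vimage) (auto intro!: continuous_intros)
    moreover have "S \<subseteq> (\<lambda>x. x + a) -` closure S"
    proof
      fix z assume "z \<in> S" then have "z + a \<in> S" by (rule csubspace_add[OF S _ that(2)])
      then show "z \<in> (\<lambda>x. x + a) -` closure S" using closure_subset by blast
    qed
    ultimately have "closure S \<subseteq> (\<lambda>x. x + a) -` closure S" by (rule closure_minimal[rotated])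
    then show ?thesis using that by blast
  qed
  have add2: "a + x \<in> closure S" if "x \<in> closure S" "a \<in> closure S" for x a
  proof -
    have "closed ((\<lambda>x. a + x) -` closure S)"
      by (rule continuous_closed_vimage) (auto intro!: continuous_intros)
    moreover have "S \<subseteq> (\<lambda>x. a + x) -` closure S" using add1 that(2) by auto
    ultimately have "closure S \<subseteq> (\<lambda>x. a + x) -` closure S" by (rule closure_minimal[rotated])
    then show ?thesis using that by blast
  qed
  have scl: "c *\<^sub>C x \<in> closure S" if "x \<in> closure S" for x c
  proof -
    have "closed ((\<lambda>x. c *\<^sub>C x) -` closure S)"
      by (rule continuous_closed_vimage) (auto intro!: linear_continuous_at bounded_linear_scaleC)
    moreover have "S \<subseteq> (\<lambda>x. c *\<^sub>C x) -` closure S"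
    proof
      fix z assume "z \<in> S" then have "c *\<^sub>C z \<in> S" by (rule csubspace_scaleC[OF S])
      then show "z \<in> (\<lambda>x. c *\<^sub>C x) -` closure S" using closure_subset by blast
    qed
    ultimately have "closure S \<subseteq> (\<lambda>x. c *\<^sub>C x) -` closure S" by (rule closure_minimal[rotated])
    then show ?thesis using that by blast
  qed
  have "0 \<in> closure S" using csubspace_0[OF S] closure_subset by blast
  then show ?thesis unfolding csubspace_def
    using add2 scl by blast
qed

lemma cjoin_cc: "closed_csubspace (cjoin F)"
  unfolding cjoin_def closed_csubspace_def using closure_csubspace[OF cspan_csubspace] closed_closure by blast

lemma cjoin_upper: "A \<in> F \<Longrightarrow> A \<subseteq> cjoin F"
  unfolding cjoin_def by (rule order_trans[OF Union_upper order_trans[OF cspan_superset closure_subset]])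

lemma cjoin_least: "closed_csubspace V \<Longrightarrow> (\<And>A. A \<in> F \<Longrightarrow> A \<subseteq> V) \<Longrightarrow> cjoin F \<subseteq> V"
proof -
  assume V: "closed_csubspace V" and H: "\<And>A. A \<in> F \<Longrightarrow> A \<subseteq> V"
  have "cspan (\<Union>F) \<subseteq> V"
    using V unfolding closed_csubspace_def by (intro cspan_least Union_least H) auto
  then show ?thesis unfolding cjoin_def using V unfolding closed_csubspace_def
    by (intro closure_minimal) auto
qed

lemma Phi_of_cc: "closed_csubspace (Phi_of J E)"
  unfolding Phi_of_def closed_csubspace_def using closure_csubspace[OF cspan_csubspace] closed_closure by blast

lemma Phi_of_mem: "T \<in> J \<Longrightarrow> x \<in> E \<Longrightarrow> T x \<in> Phi_of J E"
proof -
  assume "T \<in> J" "x \<in> E"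
  then have "T x \<in> {T x | T x. T \<in> J \<and> x \<in> E}" by blast
  then show ?thesis unfolding Phi_of_def by (rule subsetD[OF order_trans[OF cspan_superset closure_subset]])
qed

lemma Phi_of_least: "closed_csubspace V \<Longrightarrow> (\<And>T x. T \<in> J \<Longrightarrow> x \<in> E \<Longrightarrow> T x \<in> V) \<Longrightarrow> Phi_of J E \<subseteq> V"
proof -
  assume V: "closed_csubspace V" and H: "\<And>T x. T \<in> J \<Longrightarrow> x \<in> E \<Longrightarrow> T x \<in> V"
  have "{T x | T x. T \<in> J \<and> x \<in> E} \<subseteq> V" using H by blast
  then have "cspan {T x | T x. T \<in> J \<and> x \<in> E} \<subseteq> V"
    using V unfolding closed_csubspace_def by (intro cspan_least) auto
  then show ?thesis unfolding Phi_of_def using V unfolding closed_csubspace_def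
    by (intro closure_minimal) auto
qed



lemma cbl_props:
  assumes "cbounded_linear T"
  shows "T 0 = 0" "T (a + b) = T a + T b" "T (c *\<^sub>C a) = c *\<^sub>C T a" "continuous (at z) T"
proof -
  have bl: "bounded_linear T" using assms by (simp add: cbounded_linear_def)
  then interpret bounded_linear T .
  show "T 0 = 0" by (rule zero)
  show "T (a + b) = T a + T b" by (rule add)
  show "T (c *\<^sub>C a) = c *\<^sub>C T a" using assms by (simp add: cbounded_linear_def)
  show "continuous (at z) T" by (rule linear_continuous_at[OF bl])
qed

lemma cc_0: "closed_csubspace S \<Longrightarrow> 0 \<in> S"
  by (simp add: closed_csubspace_def csubspace_0)

lemma cc_scaleC: "closed_csubspace S \<Longrightarrow> x \<in> S \<Longrightarrow> c *\<^sub>C x \<in> S"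
  by (simp add: closed_csubspace_def csubspace_scaleC)

context
  fixes \<E> :: "'a::{complex_normed_vector, banach} set set"
    and \<Phi> :: "'a set \<Rightarrow> 'a set"
  assumes nest: "nest \<E>"
    and sf: "support_function \<E> \<Phi>"
    and P0: "\<Phi> {0} = {0}"
begin

lemma ecc: "E \<in> \<E> \<Longrightarrow> closed_csubspace E"
  using nest by (simp add: nest_def)

lemma zero_in: "{0} \<in> \<E>"
  using nest by (simp add: nest_def)

lemma tot: "E \<in> \<E> \<Longrightarrow> F \<in> \<E> \<Longrightarrow> E \<subseteq> F \<or> F \<subseteq> E"
  using nest unfolding nest_def by blast

lemma cjoin_in: "\<F> \<subseteq> \<E> \<Longrightarrow> cjoin \<F> \<in> \<E>"
  using nest unfolding nest_def by blast

lemma Phi_in: "E \<in> \<E> \<Longrightarrow> \<Phi> E \<in> \<E>"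
  using sf unfolding support_function_def by blast

lemma Phi_mono: "E \<in> \<E> \<Longrightarrow> F \<in> \<E> \<Longrightarrow> E \<subseteq> F \<Longrightarrow> \<Phi> E \<subseteq> \<Phi> F"
  using sf unfolding support_function_def by blast

lemma Phi_cc: "E \<in> \<E> \<Longrightarrow> closed_csubspace (\<Phi> E)"
  by (rule ecc[OF Phi_in])

lemma nm_in: "nest_minus \<E> E \<in> \<E>"
  unfolding nest_minus_def by (rule cjoin_in) blast

lemma nm_sub: "E \<in> \<E> \<Longrightarrow> nest_minus \<E> E \<subseteq> E"
  unfolding nest_minus_def by (rule cjoin_least[OF ecc]) auto

lemma nm_upper: "H \<in> \<E> \<Longrightarrow> H \<subset> E \<Longrightarrow> H \<subseteq> nest_minus \<E> E"
  unfolding nest_minus_def by (rule cjoin_upper) blast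

lemma Pm_cases:
  assumes "E \<in> \<E>"
  obtains "E = {0}" "Phi_minus \<E> \<Phi> E = \<Phi> {0}"
   | "E \<noteq> {0}" "nest_minus \<E> E \<subset> E" "Phi_minus \<E> \<Phi> E = \<Phi> E"
   | "E \<noteq> {0}" "nest_minus \<E> E = E" "Phi_minus \<E> \<Phi> E = cjoin (\<Phi> ` {F\<in>\<E>. F \<subset> E})"
  using nm_sub[OF assms] unfolding Phi_minus_def by (cases "E = {0}"; cases "nest_minus \<E> E \<subset> E") auto

lemma Pm_le: "E \<in> \<E> \<Longrightarrow> Phi_minus \<E> \<Phi> E \<subseteq> \<Phi> E"
proof -
  assume E: "E \<in> \<E>"
  show ?thesis
  proof (cases rule: Pm_cases[OF E])
    case 3
    have "cjoin (\<Phi> ` {F\<in>\<E>. F \<subset> E}) \<subseteq> \<Phi> E"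
    proof (rule cjoin_least[OF Phi_cc[OF E]])
      fix A assume "A \<in> \<Phi> ` {F\<in>\<E>. F \<subset> E}"
      then obtain F where "F \<in> \<E>" "F \<subset> E" "A = \<Phi> F" by blast
      then show "A \<subseteq> \<Phi> E" using Phi_mono[OF _ E] by blast
    qed
    then show ?thesis using 3 by simp
  qed simp_all
qed

lemma Pm_cc: "E \<in> \<E> \<Longrightarrow> closed_csubspace (Phi_minus \<E> \<Phi> E)"
proof -
  assume E: "E \<in> \<E>"
  show ?thesis
    by (cases rule: Pm_cases[OF E]) (simp_all add: Phi_cc E cjoin_cc ecc[OF zero_in] P0)
qed


lemma M_sub:
  assumes T: "T \<in> M_of \<E> \<Phi>" and E: "E \<in> \<E>"
  shows "T ` E \<subseteq> Phi_minus \<E> \<Phi> E"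
proof -
  have cbl: "cbounded_linear T" and TP: "\<And>E. E \<in> \<E> \<Longrightarrow> T ` E \<subseteq> \<Phi> E"
    using T unfolding M_of_def by blast+
  show ?thesis
  proof (cases rule: Pm_cases[OF E])
    case 1 then show ?thesis using TP[OF E] by simp
  next
    case 2 then show ?thesis using TP[OF E] by simp
  next
    case 3
    define J where "J = cjoin (\<Phi> ` {F\<in>\<E>. F \<subset> E})"
    have Jcc: "closed_csubspace J" unfolding J_def by (rule cjoin_cc)
    define V where "V = T -` J"
    have "closed_csubspace V" unfolding closed_csubspace_def csubspace_def
    proof (intro conjI ballI allI)
      show "0 \<in> V" unfolding V_def using cbl_props(1)[OF cbl] cc_0[OF Jcc] by simp
    next
      fix a b assume "a \<in> V" "b \<in> V" then show "a + b \<in> V" unfolding V_def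
        using cbl_props(2)[OF cbl] Jcc unfolding closed_csubspace_def csubspace_def by simp
    next
      fix c a assume "a \<in> V" then show "c *\<^sub>C a \<in> V" unfolding V_def
        using cbl_props(3)[OF cbl] cc_scaleC[OF Jcc] by simp
    next
      show "closed V" unfolding V_def
        using Jcc unfolding closed_csubspace_def by (intro continuous_closed_vimage cbl_props(4)[OF cbl]) simp
    qed
    then have "cjoin {F\<in>\<E>. F \<subset> E} \<subseteq> V"
    proof (rule cjoin_least)
      fix A assume A: "A \<in> {F\<in>\<E>. F \<subset> E}"
      then have "\<Phi> A \<in> \<Phi> ` {F\<in>\<E>. F \<subset> E}" by (rule imageI)
      then have "\<Phi> A \<subseteq> J" unfolding J_def by (rule cjoin_upper)
      moreover have "T ` A \<subseteq> \<Phi> A" using A TP by blast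
      ultimately show "A \<subseteq> V" unfolding V_def by blast
    qed
    then have "E \<subseteq> V" using 3 unfolding nest_minus_def by simp
    then show ?thesis using 3 unfolding V_def J_def by blast
  qed
qed

lemma opM:
  assumes F0: "closed_csubspace F0" and x: "x \<notin> F0" and H: "\<And>H. H \<in> \<E> \<Longrightarrow> H \<subseteq> F0 \<or> y \<in> \<Phi> H"
  shows "\<exists>T\<in>M_of \<E> \<Phi>. T x = y"
proof -
  obtain T where T: "cbounded_linear T" "T x = y" "\<And>m. m \<in> F0 \<Longrightarrow> T m = 0" "\<And>z. \<exists>c. T z = c *\<^sub>C y"
    using rank_one[OF F0 x, of y] by blast
  have "T ` E \<subseteq> \<Phi> E" if E: "E \<in> \<E>" for E
  proof
    fix w assume "w \<in> T ` E"
    then obtain z where z: "z \<in> E" "w = T z" by blast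
    show "w \<in> \<Phi> E"
    proof (cases "E \<subseteq> F0")
      case True
      then have "w = 0" using z T(3) by blast
      then show ?thesis using cc_0[OF Phi_cc[OF E]] by simp
    next
      case False
      then have "y \<in> \<Phi> E" using H[OF E] by blast
      moreover obtain c where "T z = c *\<^sub>C y" using T(4) by blast
      ultimately show ?thesis using z cc_scaleC[OF Phi_cc[OF E]] by simp
    qed
  qed
  then have "T \<in> M_of \<E> \<Phi>" unfolding M_of_def using T(1) by blast
  then show ?thesis using T(2) by blast
qed

lemma part1: "M_of \<E> \<Phi> = M_of \<E> (Phi_minus \<E> \<Phi>)"
proof
  show "M_of \<E> \<Phi> \<subseteq> M_of \<E> (Phi_minus \<E> \<Phi>)"
  proof
    fix T assume T: "T \<in> M_of \<E> \<Phi>"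
    then have "cbounded_linear T" unfolding M_of_def by blast
    then show "T \<in> M_of \<E> (Phi_minus \<E> \<Phi>)" unfolding M_of_def using M_sub[OF T] by blast
  qed
next
  show "M_of \<E> (Phi_minus \<E> \<Phi>) \<subseteq> M_of \<E> \<Phi>"
  proof
    fix T assume T: "T \<in> M_of \<E> (Phi_minus \<E> \<Phi>)"
    then have "cbounded_linear T" "\<And>E. E \<in> \<E> \<Longrightarrow> T ` E \<subseteq> Phi_minus \<E> \<Phi> E" unfolding M_of_def by blast+
    then show "T \<in> M_of \<E> \<Phi>" unfolding M_of_def using Pm_le by blast
  qed
qed

lemma part2:
  assumes E: "E \<in> \<E>"
  shows "Phi_of (M_of \<E> \<Phi>) E = Phi_minus \<E> \<Phi> E"
proof
  show "Phi_of (M_of \<E> \<Phi>) E \<subseteq> Phi_minus \<E> \<Phi> E"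
  proof (rule Phi_of_least[OF Pm_cc[OF E]])
    fix T x assume "T \<in> M_of \<E> \<Phi>" "x \<in> E"
    then show "T x \<in> Phi_minus \<E> \<Phi> E" using M_sub[OF _ E] by blast
  qed
next
  have PO: "closed_csubspace (Phi_of (M_of \<E> \<Phi>) E)" by (rule Phi_of_cc)
  show "Phi_minus \<E> \<Phi> E \<subseteq> Phi_of (M_of \<E> \<Phi>) E"
  proof (cases rule: Pm_cases[OF E])
    case 1 then show ?thesis using P0 cc_0[OF PO] by simp
  next
    case 2
    obtain x where x: "x \<in> E" "x \<notin> nest_minus \<E> E" using 2 by blast
    have "y \<in> Phi_of (M_of \<E> \<Phi>) E" if y: "y \<in> \<Phi> E" for y
    proof -
      have "\<exists>T\<in>M_of \<E> \<Phi>. T x = y"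
      proof (rule opM[OF ecc[OF nm_in] x(2)])
        fix H assume H: "H \<in> \<E>"
        show "H \<subseteq> nest_minus \<E> E \<or> y \<in> \<Phi> H"
        proof (cases "E \<subseteq> H")
          case True then show ?thesis using Phi_mono[OF E H] y by blast
        next
          case False then have "H \<subset> E" using tot[OF E H] by blast
          then show ?thesis using nm_upper[OF H] by blast
        qed
      qed
      then obtain T where "T \<in> M_of \<E> \<Phi>" "T x = y" by blast
      then show ?thesis using Phi_of_mem[of T _ x E] x(1) by simp
    qed
    then show ?thesis using 2 by blast
  next
    case 3
    have "cjoin (\<Phi> ` {F\<in>\<E>. F \<subset> E}) \<subseteq> Phi_of (M_of \<E> \<Phi>) E"
    proof (rule cjoin_least[OF PO])
      fix A assume "A \<in> \<Phi> ` {F\<in>\<E>. F \<subset> E}"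
      then obtain F where F: "F \<in> \<E>" "F \<subset> E" and A: "A = \<Phi> F" by blast
      have "\<exists>G\<in>\<E>. G \<subset> E \<and> \<not> G \<subseteq> F"
      proof (rule ccontr)
        assume "\<not> (\<exists>G\<in>\<E>. G \<subset> E \<and> \<not> G \<subseteq> F)"
        then have "\<And>G. G \<in> {G\<in>\<E>. G \<subset> E} \<Longrightarrow> G \<subseteq> F" by blast
        then have "cjoin {G\<in>\<E>. G \<subset> E} \<subseteq> F" by (rule cjoin_least[OF ecc[OF F(1)]])
        then have "E \<subseteq> F" using 3(2) unfolding nest_minus_def by simp
        then show False using F(2) by blast
      qed
      then obtain G where G: "G \<in> \<E>" "G \<subset> E" "\<not> G \<subseteq> F" by blast
      then obtain x where x: "x \<in> G" "x \<notin> F" by blast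
      show "A \<subseteq> Phi_of (M_of \<E> \<Phi>) E"
      proof
        fix y assume "y \<in> A"
        then have y: "y \<in> \<Phi> F" using A by simp
        have "\<exists>T\<in>M_of \<E> \<Phi>. T x = y"
        proof (rule opM[OF ecc[OF F(1)] x(2)])
          fix H assume H: "H \<in> \<E>"
          show "H \<subseteq> F \<or> y \<in> \<Phi> H"
            using tot[OF F(1) H] Phi_mono[OF F(1) H] y by blast
        qed
        then obtain T where "T \<in> M_of \<E> \<Phi>" "T x = y" by blast
        moreover have "x \<in> E" using x(1) G(2) by blast
        ultimately show "y \<in> Phi_of (M_of \<E> \<Phi>) E" using Phi_of_mem[of T _ x E] by simp
      qed
    qed
    then show ?thesis using 3 by simp
  qed
qed


lemma part3:
  assumes adm: "admissible \<E> \<Phi>" and E: "E \<in> \<E>"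
  shows "Phi_of (M_of \<E> \<Phi>) E = \<Phi> E"
proof -
  have "Phi_minus \<E> \<Phi> E = \<Phi> E"
  proof (cases rule: Pm_cases[OF E])
    case 1 then show ?thesis by simp
  next
    case 2 then show ?thesis by simp
  next
    case 3
    have "cjoin (\<Phi> ` {F\<in>\<E>. F \<subset> E}) = \<Phi> (nest_minus \<E> E)"
      using adm E 3(1) unfolding admissible_def by blast
    then show ?thesis using 3 by simp
  qed
  then show ?thesis using part2[OF E] by simp
qed

end

theorem mainTheorem5:
  fixes \<E> :: "'a::{complex_normed_vector, banach} set set"
    and \<Phi> :: "'a set \<Rightarrow> 'a set"
  assumes "nest \<E>"
    and "support_function \<E> \<Phi>"
    and "\<Phi> {0} = {0}"
  shows "M_of \<E> \<Phi> = M_of \<E> (Phi_minus \<E> \<Phi>)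
     \<and> (\<forall>E\<in>\<E>. Phi_of (M_of \<E> \<Phi>) E = Phi_minus \<E> \<Phi> E)
     \<and> (admissible \<E> \<Phi> \<longrightarrow> (\<forall>E\<in>\<E>. Phi_of (M_of \<E> \<Phi>) E = \<Phi> E))"
  using part1[OF assms] part2[OF assms] part3[OF assms] by blast

end
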